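(* Let $\eta>0$ be fixed. For all $A\ge2$, $$ \sum_{n\ge 1}A^n\rho(n)\ll \exp\left(\frac{(1+\eta)A}{\log A}\right), $$ where the implied constant depends only on $\eta$.
   Context: $\rho$ denotes the Dickman--de Bruijn function: the continuous function on $[0,\infty)$ with $\rho(t)=1$ for $0\le t\le 1$ and $t\rho'(t)=-\rho(t-1)$ for $t>1$. The sum is over positive integers $n$. *)

theory Defs
  imports "HOL-Analysis.Analysis"
begin

definition dickman :: "(real \<Rightarrow> real) \<Rightarrow> bool" where
  "dickman f \<longleftrightarrow>
     continuous_on {0..} f \<and>
     (\<forall>t\<in>{0..1}. f t = 1) \<and>
     (\<forall>t>1. \<exists>D. (f has_real_derivative D) (at t) \<and> t * D = - f (t - 1))"

end

theory Submission imports Defs begin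

lemma dk_cont: "dickman \<rho> \<Longrightarrow> continuous_on {0..} \<rho>"
  by (simp add: dickman_def)

lemma dk_one: "dickman \<rho> \<Longrightarrow> 0 \<le> t \<Longrightarrow> t \<le> 1 \<Longrightarrow> \<rho> t = 1"
  by (simp add: dickman_def)

lemma G_deriv:
  assumes "dickman \<rho>" "0 < v"
  shows "((\<lambda>u. integral {0..u} \<rho>) has_real_derivative \<rho> v) (at v)"
proof -
  have c: "continuous_on {0..v+1} \<rho>"
    using dk_cont[OF assms(1)] by (rule continuous_on_subset) auto
  have "((\<lambda>u. integral {0..u} \<rho>) has_vector_derivative \<rho> v) (at v within {0..v+1})"
    using integral_has_vector_derivative[OF c, of v] assms by auto
  moreover have "v \<in> interior {0..v+1}" using assms by auto
  then have "at v within {0..v+1} = at v" by (rule at_within_interior)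
  ultimately show ?thesis
    by (simp only: has_real_derivative_iff_has_vector_derivative)
qed

lemma int_eq:
  assumes d: "dickman \<rho>" and u: "1 \<le> u"
  shows "u * \<rho> u = integral {u-1..u} \<rho>"
proof -
  define G where "G = (\<lambda>u. integral {0..u} \<rho>)"
  define F where "F = (\<lambda>u. u * \<rho> u - G u + G (u - 1))"
  have F1: "F 1 = 0"
  proof -
    have "G 1 = integral {0..1::real} (\<lambda>_. 1::real)"
      unfolding G_def apply (rule Henstock_Kurzweil_Integration.integral_cong)
      using dk_one[OF d] by auto
    then have "G 1 = 1" by simp
    moreover have "G 0 = 0" unfolding G_def by simp
    ultimately show ?thesis unfolding F_def using dk_one[OF d, of 1] by simp
  qed
  have Fu: "F u = 0"
  proof (cases "u = 1")
    case True then show ?thesis using F1 by simp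
  next
    case False
    then have "1 < u" using u by simp
    have cr: "continuous_on {1..u} \<rho>"
      using dk_cont[OF d] by (rule continuous_on_subset) auto
    have cG: "continuous_on {0..u} G"
        unfolding G_def
        by (rule indefinite_integral_continuous_1)
           (rule integrable_continuous_interval, rule continuous_on_subset[OF dk_cont[OF d]], auto)
    have c1: "continuous_on {1..u} (\<lambda>v. v * \<rho> v)"
      by (rule continuous_on_mult[OF continuous_on_id cr])
    have c2: "continuous_on {1..u} G"
      by (rule continuous_on_subset[OF cG]) auto
    have c3: "continuous_on {1..u} (\<lambda>v. G (v - 1))"
      by (rule continuous_on_compose2[OF cG continuous_on_diff[OF continuous_on_id continuous_on_const]]) auto
    have "continuous_on {1..u} F"
      unfolding F_def by (intro continuous_on_add continuous_on_diff c1 c2 c3)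
    moreover have "DERIV F x :> 0" if "1 < x" "x < u" for x
    proof -
      have dd: "\<forall>t>1. \<exists>D. (\<rho> has_real_derivative D) (at t) \<and> t * D = - \<rho> (t - 1)"
        using d unfolding dickman_def by blast
      have "\<exists>D. (\<rho> has_real_derivative D) (at x) \<and> x * D = - \<rho> (x - 1)"
        using dd that(1) by blast
      then obtain D where D: "(\<rho> has_real_derivative D) (at x)" "x * D = - \<rho> (x - 1)"
        by blast
      have x0: "0 < x" "0 < x - 1" using that by linarith+
      have g1: "((\<lambda>u. integral {0..u} \<rho>) has_real_derivative \<rho> x) (at x)"
        by (rule G_deriv[OF d x0(1)])
      have dm: "((\<lambda>v. v - 1) has_real_derivative 1 - 0) (at x)"
        by (rule DERIV_diff[OF DERIV_ident DERIV_const])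
      have g2: "((\<lambda>u. integral {0..u - 1} \<rho>) has_real_derivative \<rho> (x - 1) * (1 - 0)) (at x)"
        using DERIV_chain2[OF G_deriv[OF d x0(2)] dm] .
      have "((\<lambda>v. v * \<rho> v - integral {0..v} \<rho> + integral {0..v - 1} \<rho>) has_real_derivative (1 * \<rho> x + D * x - \<rho> x + \<rho> (x - 1) * (1 - 0))) (at x)"
        by (rule DERIV_add[OF DERIV_diff[OF DERIV_mult[OF DERIV_ident D(1)] g1] g2])
      moreover have "F = (\<lambda>v. v * \<rho> v - integral {0..v} \<rho> + integral {0..v - 1} \<rho>)"
        unfolding F_def G_def ..
      ultimately have "(F has_real_derivative (1 * \<rho> x + D * x - \<rho> x + \<rho> (x - 1) * (1 - 0))) (at x)"
        by simp
      moreover have "1 * \<rho> x + D * x - \<rho> x + \<rho> (x - 1) * (1 - 0) = 0" using D(2) by (simp add: mult.commute)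
      ultimately show ?thesis by simp
    qed
    ultimately have "F u = F 1" using DERIV_isconst_end[OF \<open>1 < u\<close>, of F] by blast
    then show ?thesis using F1 by simp
  qed
  have ic: "\<rho> integrable_on {0..u}"
    by (rule integrable_continuous_interval) (rule continuous_on_subset[OF dk_cont[OF d]], auto)
  have "integral {0..u - 1} \<rho> + integral {u - 1..u} \<rho> = integral {0..u} \<rho>"
    by (rule Henstock_Kurzweil_Integration.integral_combine[OF _ _ ic]) (use u in auto)
  moreover have "F u = u * \<rho> u - integral {0..u} \<rho> + integral {0..u - 1} \<rho>"
    by (simp add: F_def G_def)
  ultimately show ?thesis using Fu by linarith
qed

lemma exp_int:
  fixes x a b :: real
  assumes "0 < x" "a \<le> b"
  shows "integral {a..b} (\<lambda>t. exp (-(x*t))) = (exp (-(x*a)) - exp (-(x*b))) / x"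
proof -
  have "((\<lambda>t. exp (-(x*t))) has_integral ((- exp (-(x*b)) / x) - (- exp (-(x*a)) / x))) {a..b}"
  proof (rule fundamental_theorem_of_calculus[OF assms(2)])
    fix t assume "t \<in> {a..b}"
    have "((\<lambda>t. - exp (-(x*t)) / x) has_real_derivative exp (-(x*t))) (at t)"
      using assms(1) by (auto intro!: derivative_eq_intros)
    then show "((\<lambda>t. - exp (-(x*t)) / x) has_vector_derivative exp (-(x*t))) (at t within {a..b})"
      by (simp add: has_real_derivative_iff_has_vector_derivative has_vector_derivative_at_within)
  qed
  then show ?thesis by (simp add: integral_unique diff_divide_distrib)
qed

lemma L1:
  assumes d: "dickman \<rho>" and x: "0 < x"
    and S: "\<forall>t\<in>{0..(exp x - 1)/x}. \<bar>\<rho> t\<bar> * exp (x*t) \<le> S" and u: "0 \<le> u"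
  shows "\<bar>\<rho> u\<bar> * exp (x*u) \<le> S"
proof (rule ccontr)
  assume nc: "\<not> ?thesis"
  define H where "H = (\<lambda>t. \<bar>\<rho> t\<bar> * exp (x*t))"
  define u0 where "u0 = (exp x - 1)/x"
  have "1 + x \<le> exp x" by (rule exp_ge_add_one_self)
  then have u01: "1 \<le> u0" unfolding u0_def using x by (simp add: field_simps)
  have cH: "continuous_on {0..u} H"
    unfolding H_def
    by (intro continuous_intros continuous_on_subset[OF dk_cont[OF d]]) auto
  obtain t where t: "t \<in> {0..u}" "\<forall>y\<in>{0..u}. H y \<le> H t"
    using continuous_attains_sup[OF compact_Icc _ cH] u by auto
  have "0 \<in> {0..u0}" using u01 by simp
  then have "H 0 \<le> S" using S unfolding H_def u0_def by blast
  then have S1: "1 \<le> S" unfolding H_def using dk_one[OF d, of 0] by simp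
  have "H u > S" using nc unfolding H_def by simp
  moreover have "H u \<le> H t" using t u by auto
  ultimately have Ht: "H t > S" by linarith
  have tu0: "t > u0"
  proof (rule ccontr)
    assume "\<not> t > u0"
    then have "H t \<le> S" using S t unfolding H_def u0_def by auto
    then show False using Ht by simp
  qed
  then have t1: "1 \<le> t" using u01 by simp
  have "t * \<bar>\<rho> t\<bar> = \<bar>integral {t-1..t} \<rho>\<bar>"
    using int_eq[OF d t1] t1 by (metis abs_mult abs_of_nonneg order_trans zero_le_one)
  also have "\<dots> \<le> integral {t-1..t} (\<lambda>y. H t * exp (-(x*y)))"
  proof -
    have "norm (integral {t-1..t} \<rho>) \<le> integral {t-1..t} (\<lambda>y. H t * exp (-(x*y)))"
    proof (rule integral_norm_bound_integral)
      show "\<rho> integrable_on {t-1..t}"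
        using t1 by (intro integrable_continuous_interval continuous_on_subset[OF dk_cont[OF d]]) auto
      show "(\<lambda>y. H t * exp (-(x*y))) integrable_on {t-1..t}"
        by (intro integrable_continuous_interval continuous_intros)
      fix y assume y: "y \<in> {t-1..t}"
      then have "y \<in> {0..u}" using t t1 by auto
      then have "H y \<le> H t" using t by auto
      then have "H y * exp (-(x*y)) \<le> H t * exp (-(x*y))" by simp
      moreover have "H y * exp (-(x*y)) = \<bar>\<rho> y\<bar>"
        unfolding H_def by (simp add: mult.assoc flip: exp_add)
      ultimately show "norm (\<rho> y) \<le> H t * exp (-(x*y))" by simp
    qed
    then show ?thesis by simp
  qed
  also have "\<dots> = H t * ((exp (-(x*(t-1))) - exp (-(x*t))) / x)"
    using exp_int[OF x, of "t-1" t] by simp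
  also have "\<dots> = \<bar>\<rho> t\<bar> * u0"
  proof -
    have "exp (-(x*(t-1))) = exp (-(x*t)) * exp x" by (simp add: algebra_simps flip: exp_add)
    then have "(exp (-(x*(t-1))) - exp (-(x*t))) / x = exp (-(x*t)) * u0"
      unfolding u0_def by (simp add: algebra_simps)
    then show ?thesis unfolding H_def by (simp add: mult.assoc flip: exp_add)
  qed
  finally have "t * \<bar>\<rho> t\<bar> \<le> \<bar>\<rho> t\<bar> * u0" .
  then have "(t - u0) * \<bar>\<rho> t\<bar> \<le> 0" by (simp add: algebra_simps)
  then have "\<bar>\<rho> t\<bar> = 0" using tu0
    by (metis abs_ge_zero diff_gt_0_iff_gt linorder_not_le mult_pos_pos order_antisym_conv)
  then have "H t = 0" unfolding H_def by simp
  then show False using Ht S1 by simp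
qed

lemma bounded_start:
  assumes d: "dickman \<rho>" and x: "0 < x"
  shows "\<exists>S. \<forall>u\<ge>0. \<bar>\<rho> u\<bar> * exp (x*u) \<le> S"
proof -
  define H where "H = (\<lambda>t. \<bar>\<rho> t\<bar> * exp (x*t))"
  have cH: "continuous_on {0..(exp x - 1)/x} H"
    unfolding H_def
    by (intro continuous_intros continuous_on_subset[OF dk_cont[OF d]]) auto
  have "1 + x \<le> exp x" by (rule exp_ge_add_one_self)
  then have "0 \<le> (exp x - 1)/x" using x by simp
  then obtain t where t: "t \<in> {0..(exp x - 1)/x}" "\<forall>y\<in>{0..(exp x - 1)/x}. H y \<le> H t"
    using continuous_attains_sup[OF compact_Icc _ cH] by auto
  have "\<forall>u\<ge>0. \<bar>\<rho> u\<bar> * exp (x*u) \<le> H t"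
    using L1[OF d x, of "H t"] t(2) unfolding H_def by blast
  then show ?thesis by blast
qed

lemma step:
  assumes d: "dickman \<rho>" and h: "0 < h" "h < x"
    and B: "\<forall>u\<ge>0. \<bar>\<rho> u\<bar> * exp ((x-h)*u) \<le> B" and u: "0 \<le> u"
  shows "\<bar>\<rho> u\<bar> * exp (x*u) \<le> B * exp (h*((exp x - 1)/x))"
proof (rule L1[OF d _ _ u])
  show "0 < x" using h by simp
  have B0: "0 \<le> B" using B[rule_format, of 0] dk_one[OF d, of 0] by simp
  show "\<forall>t\<in>{0..(exp x - 1)/x}. \<bar>\<rho> t\<bar> * exp (x*t) \<le> B * exp (h*((exp x - 1)/x))"
  proof
    fix t assume t: "t \<in> {0..(exp x - 1)/x}"
    have "\<bar>\<rho> t\<bar> * exp (x*t) = (\<bar>\<rho> t\<bar> * exp ((x-h)*t)) * exp (h*t)"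
      by (simp add: mult.assoc algebra_simps flip: exp_add)
    also have "\<dots> \<le> B * exp (h*t)"
      using B t by (intro mult_right_mono) auto
    also have "\<dots> \<le> B * exp (h*((exp x - 1)/x))"
      using t h B0 by (intro mult_left_mono exp_mono) auto
    finally show "\<bar>\<rho> t\<bar> * exp (x*t) \<le> B * exp (h*((exp x - 1)/x))" .
  qed
qed

lemma key_ineq:
  fixes s x :: real
  assumes s: "0 < s" "s \<le> 1/4" and x: "x \<ge> 1/s + 1 + s/2"
  shows "(1 + 2 * s) * exp (x - s/2) / (x - s/2) + s/2 * ((exp x - 1)/x) \<le> (1 + 2 * s) * exp x / x"
proof -
  define h where "h = s/2"
  define c where "c = 1 + 2 * s"
  define E where "E = exp x"
  have "1/s \<ge> 4" using s by (simp add: field_simps)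
  then have x5: "x \<ge> 5" using x s by linarith
  have E0: "0 < E" unfolding E_def by simp
  have hp: "0 < h" "h < x" using s x5 unfolding h_def by auto
  have sx: "s * x \<ge> 1 + s + s^2/2"
  proof -
    have "s * x \<ge> s * (1/s + 1 + s/2)" using x s by (intro mult_left_mono) auto
    also have "s * (1/s + 1 + s/2) = 1 + s + s^2/2" using s by (simp add: field_simps power2_eq_square)
    finally show ?thesis .
  qed
  have claim2: "c * x \<le> (c - h) * (1 + h) * (x - h)"
  proof -
    have "(c - h) * (1 + h) * (x - h) - c * x = 3/4 * s * (s * x) - s/2 * (1 + 2 * s + 3/4 * s^2)"
      unfolding c_def h_def power2_eq_square by (simp add: field_simps)
    moreover have "3/4 * s * (s * x) \<ge> 3/4 * s * (1 + s + s^2/2)"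
      using sx s by (intro mult_left_mono) auto
    moreover have "3/4 * s * (1 + s + s^2/2) - s/2 * (1 + 2 * s + 3/4 * s^2) = s/4 * (1 - s)"
      by (simp add: algebra_simps power2_eq_square power3_eq_cube)
    moreover have "s/4 * (1 - s) \<ge> 0" using s by auto
    ultimately show ?thesis by linarith
  qed
  have eh: "1 + h \<le> exp h" by (rule exp_ge_add_one_self)
  have t1: "c * exp (x - h) / (x - h) \<le> c * E / ((1 + h) * (x - h))"
  proof -
    have "exp (x - h) = E / exp h" unfolding E_def by (simp add: exp_diff)
    also have "\<dots> \<le> E / (1 + h)" using eh hp E0 by (intro divide_left_mono) auto
    finally have "exp (x - h) \<le> E / (1 + h)" .
    then have "c * exp (x - h) / (x - h) \<le> c * (E / (1 + h)) / (x - h)"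
      using hp unfolding c_def using s by (intro divide_right_mono mult_left_mono) auto
    then show ?thesis by (simp add: field_simps)
  qed
  have t2: "c * E / ((1 + h) * (x - h)) \<le> (c - h) * E / x"
  proof -
    define P where "P = (1 + h) * (x - h)"
    have P0: "0 < P" unfolding P_def using hp by auto
    have "c \<le> (c - h) * P / x" using claim2 hp unfolding P_def by (simp add: le_divide_eq mult.assoc)
    then have "c / P \<le> ((c - h) * P / x) / P" using P0 by (intro divide_right_mono) auto
    also have "\<dots> = (c - h) / x" using P0 by simp
    finally have "c / ((1 + h) * (x - h)) \<le> (c - h) / x" unfolding P_def .
    then have "E * (c / ((1 + h) * (x - h))) \<le> E * ((c - h) / x)"
      using E0 by (intro mult_left_mono) auto
    then show ?thesis by (simp add: field_simps)
  qed
  have t3: "h * ((E - 1) / x) \<le> h * E / x"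
    using hp by (simp add: field_simps)
  have "c * exp (x - h) / (x - h) + h * ((E - 1)/x) \<le> (c - h) * E / x + h * E / x"
    using t1 t2 t3 by linarith
  also have "\<dots> = ((c - h) * E + h * E) / x" by (rule add_divide_distrib[symmetric])
  also have "\<dots> = c * E / x" by (simp add: left_diff_distrib)
  finally show ?thesis unfolding c_def h_def E_def .
qed

lemma growth:
  assumes d: "dickman \<rho>" and s: "0 < s" "s \<le> 1/4"
  shows "\<exists>K. \<forall>x \<ge> 1/s + 1. \<forall>u \<ge> 0. \<bar>\<rho> u\<bar> * exp (x*u) \<le> K * exp ((1 + 2 * s) * exp x / x)"
proof -
  define h where "h = s/2"
  define X where "X = 1/s + 1"
  define c where "c = 1 + 2 * s"
  have "1/s \<ge> 4" using s by (simp add: field_simps)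
  then have X5: "X \<ge> 5" unfolding X_def by linarith
  have h0: "0 < h" unfolding h_def using s by simp
  have c0: "0 < c" unfolding c_def using s by simp
  obtain K where K: "\<forall>u\<ge>0. \<bar>\<rho> u\<bar> * exp ((X+h)*u) \<le> K"
    using bounded_start[OF d, of "X+h"] X5 h0 by auto
  have K0: "0 \<le> K" using K[rule_format, of 0] by simp
  have base: "\<bar>\<rho> u\<bar> * exp (x*u) \<le> K * exp (c * exp x / x)"
    if "X \<le> x" "x \<le> X + h" "0 \<le> u" for x u
  proof -
    have "\<bar>\<rho> u\<bar> * exp (x*u) \<le> \<bar>\<rho> u\<bar> * exp ((X+h)*u)"
      using that by (intro mult_left_mono) (auto intro!: mult_right_mono)
    also have "\<dots> \<le> K" using K that by auto
    also have "\<dots> \<le> K * exp (c * exp x / x)"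
    proof -
      have "0 \<le> c * exp x / x" using c0 that X5 by auto
      then have "1 \<le> exp (c * exp x / x)" by simp
      then show ?thesis using K0 by (metis mult_left_mono mult.right_neutral)
    qed
    finally show ?thesis .
  qed
  have ind: "\<forall>x. X \<le> x \<and> x \<le> X + real (Suc n) * h \<longrightarrow> (\<forall>u\<ge>0. \<bar>\<rho> u\<bar> * exp (x*u) \<le> K * exp (c * exp x / x))" for n
  proof (induction n)
    case 0
    then show ?case using base by simp
  next
    case (Suc n)
    show ?case
    proof (intro allI impI)
      fix x u :: real
      assume x: "X \<le> x \<and> x \<le> X + real (Suc (Suc n)) * h" and u: "0 \<le> u"
      show "\<bar>\<rho> u\<bar> * exp (x*u) \<le> K * exp (c * exp x / x)"
      proof (cases "x \<le> X + real (Suc n) * h")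
        case True
        then show ?thesis using Suc.IH x u by blast
      next
        case False
        have hn: "0 \<le> h * real n" using h0 by simp
        have e1: "X + h \<le> X + real (Suc n) * h" using hn by (simp add: algebra_simps)
        have e2: "X + real (Suc (Suc n)) * h = X + real (Suc n) * h + h" by (simp add: algebra_simps)
        have xh: "X \<le> x - h \<and> x - h \<le> X + real (Suc n) * h"
          using False x e1 e2 by linarith
        have IH: "\<forall>u\<ge>0. \<bar>\<rho> u\<bar> * exp ((x-h)*u) \<le> K * exp (c * exp (x-h) / (x-h))"
          using Suc.IH xh by blast
        have xX: "x \<ge> X + h" using xh by linarith
        have "\<bar>\<rho> u\<bar> * exp (x*u) \<le> K * exp (c * exp (x-h) / (x-h)) * exp (h*((exp x - 1)/x))"
          by (rule step[OF d h0 _ IH u]) (use xX X5 in linarith)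
        also have "\<dots> = K * exp (c * exp (x-h) / (x-h) + h*((exp x - 1)/x))"
          by (simp add: exp_add)
        also have "\<dots> \<le> K * exp (c * exp x / x)"
        proof -
          have "c * exp (x-h) / (x-h) + h*((exp x - 1)/x) \<le> c * exp x / x"
            using key_ineq[OF s, of x] xX unfolding c_def h_def X_def by simp
          then show ?thesis using K0 by (intro mult_left_mono) auto
        qed
        finally show ?thesis .
      qed
    qed
  qed
  have "\<forall>x \<ge> X. \<forall>u \<ge> 0. \<bar>\<rho> u\<bar> * exp (x*u) \<le> K * exp (c * exp x / x)"
  proof (intro allI impI)
    fix x u :: real assume x: "X \<le> x" and u: "0 \<le> u"
    define n where "n = nat \<lceil>(x - X)/h\<rceil>"
    have "(x - X)/h \<le> real n" unfolding n_def by linarith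
    then have "x - X \<le> real n * h" using h0 by (simp add: divide_le_eq)
    then have "x \<le> X + real (Suc n) * h" using h0 by (simp add: algebra_simps)
    then show "\<bar>\<rho> u\<bar> * exp (x*u) \<le> K * exp (c * exp x / x)" using ind[of n] x u by blast
  qed
  then show ?thesis unfolding X_def c_def by blast
qed

theorem lemma2p1:
  fixes \<eta> :: real and \<rho> :: "real \<Rightarrow> real"
  assumes "\<eta> > 0" and "dickman \<rho>"
  shows "\<exists>C. \<forall>A::real. A \<ge> 2 \<longrightarrow>
           summable (\<lambda>n. A ^ (n + 1) * \<rho> (real (n + 1))) \<and>
           \<bar>\<Sum>n. A ^ (n + 1) * \<rho> (real (n + 1))\<bar> \<le> C * exp ((1 + \<eta>) * A / ln A)"
proof -
  have eta: "0 < \<eta>" and d: "dickman \<rho>" using assms by auto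
  define s where "s = min (1/4) (\<eta>/4)"
  have s: "0 < s" "s \<le> 1/4" "s \<le> \<eta>/4" unfolding s_def using eta by auto
  define h where "h = s/2"
  define X where "X = 1/s + 1"
  define c where "c = 1 + 2 * s"
  have h0: "0 < h" unfolding h_def using s by simp
  have c0: "0 < c" unfolding c_def using s by simp
  have "1/s \<ge> 4" using s by (simp add: field_simps)
  then have X5: "X \<ge> 5" unfolding X_def by linarith
  obtain K where K: "\<forall>x \<ge> X. \<forall>u \<ge> 0. \<bar>\<rho> u\<bar> * exp (x*u) \<le> K * exp (c * exp x / x)"
    using growth[OF d s(1,2)] unfolding X_def c_def by blast
  have K0: "0 \<le> K"
  proof -
    have "\<bar>\<rho> 0\<bar> * exp (X*0) \<le> K * exp (c * exp X / X)" using K by blast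
    then have "0 < K * exp (c * exp X / X)" using dk_one[OF d, of 0] by simp
    then have "0 < K" by (rule zero_less_mult_pos2) simp
    then show ?thesis by simp
  qed
  have ceh: "c * exp h \<le> 1 + \<eta>"
  proof -
    have "norm h \<le> 1/2" using h0 s unfolding h_def by simp
    then have "norm (exp h) \<le> 1 + 2 * norm h" by (rule exp_bound_lemma)
    then have "exp h \<le> 1 + s" using h0 unfolding h_def by simp
    then have "c * exp h \<le> c * (1 + s)" using c0 by (intro mult_left_mono) auto
    also have "c * (1 + s) = 1 + 3 * s + 2 * s * s" unfolding c_def by (simp add: algebra_simps)
    also have "\<dots> \<le> 1 + 4 * s" using s by (simp add: mult_right_mono)
    also have "\<dots> \<le> 1 + \<eta>" using s by simp
    finally show ?thesis .
  qed
  define C where "C = K * exp (c * exp X / X) / (1 - exp (-h))"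
  show ?thesis
  proof (rule exI[of _ C], intro allI impI)
    fix A :: real assume A: "2 \<le> A"
    have lnA: "0 < ln A" using A by simp
    define x where "x = max (ln A + h) X"
    have xX: "X \<le> x" "ln A + h \<le> x" unfolding x_def by auto
    have x0: "0 < x" using xX X5 by simp
    define r where "r = A * exp (-x)"
    have r0: "0 \<le> r" unfolding r_def using A by simp
    have "r = exp (ln A - x)" unfolding r_def using A by (simp add: exp_diff exp_minus field_simps)
    also have "\<dots> \<le> exp (-h)" using xX by simp
    finally have r1: "r \<le> exp (-h)" .
    have eh1: "exp (-h) < 1" using h0 by simp
    have rl1: "r < 1" using r1 eh1 by linarith
    define E where "E = exp (c * exp x / x)"
    have E0: "0 < E" unfolding E_def by simp
    define f where "f = (\<lambda>n::nat. A ^ (n + 1) * \<rho> (real (n + 1)))"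
    have bnd: "\<bar>f n\<bar> \<le> K * E * r * r ^ n" for n
    proof -
      have Kb: "\<bar>\<rho> (real (n+1))\<bar> * exp (x * real (n+1)) \<le> K * E"
        using K xX unfolding E_def by auto
      have "r ^ (n+1) = A ^ (n+1) * exp (-x) ^ (n+1)" unfolding r_def by (simp add: power_mult_distrib)
      also have "exp (-x) ^ (n+1) = exp (real (n+1) * (-x))" by (rule exp_of_nat_mult[symmetric])
      finally have rn: "r ^ (n+1) = A ^ (n+1) * exp (real (n+1) * (-x))" .
      have "\<bar>f n\<bar> = A ^ (n+1) * \<bar>\<rho> (real (n+1))\<bar>" unfolding f_def using A by (simp add: abs_mult)
      also have "\<dots> = r ^ (n+1) * (\<bar>\<rho> (real (n+1))\<bar> * exp (x * real (n+1)))"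
      proof -
        have "exp (real (n+1) * (-x)) * exp (x * real (n+1)) = 1"
          by (simp add: mult.commute flip: exp_add)
        then show ?thesis unfolding rn by (metis (no_types, lifting) mult.assoc mult.left_commute mult.right_neutral)
      qed
      also have "\<dots> \<le> r ^ (n+1) * (K * E)" using Kb r0 by (intro mult_left_mono) auto
      also have "\<dots> = K * E * r * r ^ n" by (simp add: algebra_simps)
      finally show ?thesis .
    qed
    have sg: "summable (\<lambda>n. K * E * r * r ^ n)"
      using r0 rl1 by (intro summable_mult summable_geometric) simp
    have sabs: "summable (\<lambda>n. \<bar>f n\<bar>)"
      by (rule summable_comparison_test'[OF sg, of 0]) (use bnd in simp)
    have sf: "summable f"
      by (rule summable_comparison_test'[OF sg, of 0]) (use bnd in simp)
    have "\<bar>suminf f\<bar> \<le> (\<Sum>n. \<bar>f n\<bar>)" by (rule summable_rabs[OF sabs])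
    also have "\<dots> \<le> (\<Sum>n. K * E * r * r ^ n)" by (rule suminf_le[OF bnd sabs sg])
    also have "\<dots> = K * E * r * (1 / (1 - r))"
      using r0 rl1 by (simp add: suminf_mult suminf_geometric)
    also have "\<dots> \<le> K * E * (1 / (1 - exp (-h)))"
    proof -
      have "r * (1 / (1 - r)) \<le> 1 / (1 - r)" using r0 rl1 by (simp add: divide_le_eq)
      also have "\<dots> \<le> 1 / (1 - exp (-h))"
      proof (rule divide_left_mono)
        show "1 - exp (-h) \<le> 1 - r" using r1 by linarith
        have "0 < 1 - r" "0 < 1 - exp (-h)" using rl1 eh1 by linarith+
        then show "0 < (1 - r) * (1 - exp (-h))" by (rule mult_pos_pos)
      qed simp
      finally have "r * (1 / (1 - r)) \<le> 1 / (1 - exp (-h))" .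
      then have "K * E * (r * (1 / (1 - r))) \<le> K * E * (1 / (1 - exp (-h)))"
        using K0 E0 by (intro mult_left_mono) auto
      then show ?thesis by (simp add: mult.assoc)
    qed
    also have "\<dots> \<le> K * (exp (c * exp X / X) * exp ((1 + \<eta>) * A / ln A)) * (1 / (1 - exp (-h)))"
    proof -
      have q0: "0 \<le> (1 + \<eta>) * A / ln A" using eta A lnA by simp
      have "E \<le> exp (c * exp X / X) * exp ((1 + \<eta>) * A / ln A)"
      proof (cases "X \<le> ln A + h")
        case True
        then have xe: "x = ln A + h" unfolding x_def by simp
        have "c * exp x / x = c * exp h * A / (ln A + h)"
          unfolding xe using A by (simp add: exp_add algebra_simps)
        also have "\<dots> \<le> c * exp h * A / ln A"
        proof (rule divide_left_mono)
          show "ln A \<le> ln A + h" using h0 by simp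
          show "0 \<le> c * exp h * A" using c0 A by simp
          have "0 < ln A + h" using lnA h0 by linarith
          then show "0 < (ln A + h) * ln A" using lnA by (rule mult_pos_pos)
        qed
        also have "\<dots> \<le> (1 + \<eta>) * A / ln A"
          using ceh A lnA by (intro divide_right_mono mult_right_mono) auto
        finally have "E \<le> exp ((1 + \<eta>) * A / ln A)" unfolding E_def by simp
        also have "\<dots> \<le> exp (c * exp X / X) * exp ((1 + \<eta>) * A / ln A)"
          using c0 X5 by simp
        finally show ?thesis .
      next
        case False
        then have xe: "x = X" unfolding x_def by simp
        have "1 \<le> exp ((1 + \<eta>) * A / ln A)" using q0 by simp
        then show ?thesis unfolding E_def xe by simp
      qed
      moreover have "0 \<le> 1 / (1 - exp (-h))" using eh1 by simp
      ultimately show ?thesis using K0 by (intro mult_right_mono mult_left_mono) auto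
    qed
    also have "\<dots> = C * exp ((1 + \<eta>) * A / ln A)" unfolding C_def by simp
    finally have "\<bar>suminf f\<bar> \<le> C * exp ((1 + \<eta>) * A / ln A)" .
    then show "summable (\<lambda>n. A ^ (n + 1) * \<rho> (real (n + 1))) \<and>
           \<bar>\<Sum>n. A ^ (n + 1) * \<rho> (real (n + 1))\<bar> \<le> C * exp ((1 + \<eta>) * A / ln A)"
      using sf unfolding f_def by simp
  qed
qed

end
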